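(* (i) For $x\notin\bigcup_{q\ge1}\mathrm{Fix}_q(\sigma)^\circ$, $\omega_x$ is a hermitian character of $C(X)'_{00}$ which is continuous in the topology induced by the norm of $\ell^1(\Sigma)$. (ii) Let $x\in\bigcup_{q\ge1}\mathrm{Fix}_q(\sigma)^\circ$ and $c\in\mathbb{C}\setminus\{0\}$. Then the following are equivalent: (a) $\omega_{x,c}$ is continuous on $C(X)'_{00}$ in the topology induced by $\ell^1(\Sigma)$; (b) $\omega_{x,c}$ is a hermitian character of $C(X)'_{00}$; (c) $c\in\mathbb{T}$.
   Context: Let $X$ be a non-empty compact Hausdorff space and $\sigma:X\to X$ a homeomorphism; $\mathrm{Fix}_k(\sigma)=\{x:\sigma^kx=x\}$, superscript $\circ$ denotes interior, $\mathrm{supp}(f)$ the closure of $\{f\ne0\}$. $C(X)$ is the algebra of continuous complex functions with sup norm, $\alpha(f)=f\circ\sigma^{-1}$. $\ell^1(\Sigma)$ is the set of $\ell:\mathbb{Z}\to C(X)$ with $\|\ell\|=\sum_k\|\ell(k)\|_\infty<\infty$, product $(\ell\ell')(n)=\sum_k\ell(k)\alpha^k(\ell'(n-k))$, involution $\ell^*(n)=\overline{\alpha^n(\ell(-n))}$; elements are written $\sum_kf_k\delta^k$ with $f_k=\ell(k)$, and $C(X)$ is embedded as $\{f\delta^0\}$. $c_{00}(\Sigma)$ is the $*$-subalgebra of finite sums and $C(X)'_{00}$ is the commutant of $C(X)$ in it, equal to $\{\sum_kf_k\delta^k\in c_{00}(\Sigma):\mathrm{supp}(f_k)\subset\mathrm{Fix}_k(\sigma)\}$.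 For $x\notin\bigcup_{q\ge1}\mathrm{Fix}_q(\sigma)^\circ$, $\omega_x(\sum_kf_k\delta^k)=f_0(x)$; for $x\in\bigcup_{q\ge1}\mathrm{Fix}_q(\sigma)^\circ$ and $c\ne0$, $\omega_{x,c}(\sum_kf_k\delta^k)=\sum_jf_{jn}(x)c^j$, with $n$ the minimal $n\ge1$ such that $x\in\mathrm{Fix}_n(\sigma)^\circ$; these are characters of $C(X)'_{00}$. A character $\omega$ is hermitian if $\omega(a^* )=\overline{\omega(a)}$ for all $a$. *)

theory Defs
  imports "HOL-Analysis.Analysis"
begin

type_synonym 'a l1elem = "int \<Rightarrow> 'a \<Rightarrow> complex"

definition sigma_pow :: "('a \<Rightarrow> 'a) \<Rightarrow> int \<Rightarrow> 'a \<Rightarrow> 'a" where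
  "sigma_pow \<sigma> k = (if k \<ge> 0 then \<sigma> ^^ nat k else (inv \<sigma>) ^^ nat (- k))"

definition alpha_pow :: "('a \<Rightarrow> 'a) \<Rightarrow> int \<Rightarrow> ('a \<Rightarrow> complex) \<Rightarrow> ('a \<Rightarrow> complex)" where
  "alpha_pow \<sigma> k f = f \<circ> sigma_pow \<sigma> (- k)"

definition Fix :: "('a \<Rightarrow> 'a) \<Rightarrow> int \<Rightarrow> 'a set" where
  "Fix \<sigma> k = {x. sigma_pow \<sigma> k x = x}"

definition FixInt :: "('a::topological_space \<Rightarrow> 'a) \<Rightarrow> 'a set" where
  "FixInt \<sigma> = (\<Union>q\<in>{q::int. q \<ge> 1}. interior (Fix \<sigma> q))"

definition supp :: "('a::topological_space \<Rightarrow> complex) \<Rightarrow> 'a set" where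
  "supp f = closure {x. f x \<noteq> 0}"

definition coeff_support :: "'a l1elem \<Rightarrow> int set" where
  "coeff_support l = {k. l k \<noteq> (\<lambda>_. 0)}"

definition sup_norm :: "('a \<Rightarrow> complex) \<Rightarrow> real" where
  "sup_norm f = (SUP x. cmod (f x))"

text \<open>The l1 norm (for finitely supported elements the sum is finite).\<close>
definition l1_norm :: "'a l1elem \<Rightarrow> real" where
  "l1_norm l = (\<Sum>k\<in>coeff_support l. sup_norm (l k))"

definition c00 :: "'a::topological_space l1elem set" where
  "c00 = {l. finite (coeff_support l) \<and> (\<forall>k. continuous_on UNIV (l k))}"

text \<open>The commutant C(X)'_00, in the explicit form given in the context.\<close>
definition C00' :: "('a::topological_space \<Rightarrow> 'a) \<Rightarrow> 'a l1elem set" where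
  "C00' \<sigma> = {l \<in> c00. \<forall>k. supp (l k) \<subseteq> Fix \<sigma> k}"

definition l1_add :: "'a l1elem \<Rightarrow> 'a l1elem \<Rightarrow> 'a l1elem" where
  "l1_add a b = (\<lambda>k x. a k x + b k x)"

definition l1_diff :: "'a l1elem \<Rightarrow> 'a l1elem \<Rightarrow> 'a l1elem" where
  "l1_diff a b = (\<lambda>k x. a k x - b k x)"

definition l1_scale :: "complex \<Rightarrow> 'a l1elem \<Rightarrow> 'a l1elem" where
  "l1_scale c a = (\<lambda>k x. c * a k x)"

definition l1_mult :: "('a \<Rightarrow> 'a) \<Rightarrow> 'a l1elem \<Rightarrow> 'a l1elem \<Rightarrow> 'a l1elem" where
  "l1_mult \<sigma> a b = (\<lambda>n x. \<Sum>k\<in>coeff_support a. a k x * alpha_pow \<sigma> k (b (n - k)) x)"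

definition l1_star :: "('a \<Rightarrow> 'a) \<Rightarrow> 'a l1elem \<Rightarrow> 'a l1elem" where
  "l1_star \<sigma> a = (\<lambda>n x. cnj (alpha_pow \<sigma> n (a (- n)) x))"

definition is_character :: "('a \<Rightarrow> 'a) \<Rightarrow> 'a l1elem set \<Rightarrow> ('a l1elem \<Rightarrow> complex) \<Rightarrow> bool" where
  "is_character \<sigma> A \<omega> \<longleftrightarrow>
     (\<forall>a\<in>A. \<forall>b\<in>A. \<omega> (l1_add a b) = \<omega> a + \<omega> b) \<and>
     (\<forall>c. \<forall>a\<in>A. \<omega> (l1_scale c a) = c * \<omega> a) \<and>
     (\<forall>a\<in>A. \<forall>b\<in>A. \<omega> (l1_mult \<sigma> a b) = \<omega> a * \<omega> b) \<and>
     (\<exists>a\<in>A. \<omega> a \<noteq> 0)"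

definition is_hermitian_character :: "('a \<Rightarrow> 'a) \<Rightarrow> 'a l1elem set \<Rightarrow> ('a l1elem \<Rightarrow> complex) \<Rightarrow> bool" where
  "is_hermitian_character \<sigma> A \<omega> \<longleftrightarrow>
     is_character \<sigma> A \<omega> \<and> (\<forall>a\<in>A. \<omega> (l1_star \<sigma> a) = cnj (\<omega> a))"

definition l1_continuous_on :: "'a l1elem set \<Rightarrow> ('a l1elem \<Rightarrow> complex) \<Rightarrow> bool" where
  "l1_continuous_on A \<omega> \<longleftrightarrow>
     (\<forall>a\<in>A. \<forall>e>0. \<exists>d>0. \<forall>b\<in>A. l1_norm (l1_diff b a) < d \<longrightarrow> cmod (\<omega> b - \<omega> a) < e)"

definition omega_x :: "'a \<Rightarrow> 'a l1elem \<Rightarrow> complex" where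
  "omega_x x a = a 0 x"

definition min_period :: "('a::topological_space \<Rightarrow> 'a) \<Rightarrow> 'a \<Rightarrow> int" where
  "min_period \<sigma> x = (LEAST n. n \<ge> 1 \<and> x \<in> interior (Fix \<sigma> n))"

definition omega_xc :: "('a::topological_space \<Rightarrow> 'a) \<Rightarrow> 'a \<Rightarrow> complex \<Rightarrow> 'a l1elem \<Rightarrow> complex" where
  "omega_xc \<sigma> x c a =
     (\<Sum>j\<in>{j. j * min_period \<sigma> x \<in> coeff_support a}. a (j * min_period \<sigma> x) x * c powi j)"

end

theory Submission
  imports Defs
begin

lemma sp0: "sigma_pow \<sigma> 0 = id" by (simp add: sigma_pow_def)

lemma sp_succ:
  assumes "bij \<sigma>" shows "sigma_pow \<sigma> (k+1) = \<sigma> \<circ> sigma_pow \<sigma> k"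
proof -
  have si: "\<sigma> \<circ> inv \<sigma> = id" using assms by (simp add: fun_eq_iff bij_is_surj surj_f_inv_f)
  consider "k \<ge> 0" | "k = -1" | "k < -1" by linarith
  then show ?thesis
  proof cases
    case 1
    then have "nat (k+1) = Suc (nat k)" by simp
    then show ?thesis using 1 by (simp add: sigma_pow_def)
  next
    case 2 then show ?thesis using si by (simp add: sigma_pow_def)
  next
    case 3
    then have "nat (-k) = Suc (nat (-(k+1)))" by simp
    then have "sigma_pow \<sigma> k = inv \<sigma> \<circ> sigma_pow \<sigma> (k+1)"
      using 3 by (simp add: sigma_pow_def)
    then show ?thesis using si by (simp add: comp_assoc[symmetric])
  qed
qed

lemma sp_pred:
  assumes "bij \<sigma>" shows "sigma_pow \<sigma> (k-1) = inv \<sigma> \<circ> sigma_pow \<sigma> k"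
proof -
  have is_: "inv \<sigma> \<circ> \<sigma> = id" using assms by (simp add: fun_eq_iff bij_is_inj)
  have "sigma_pow \<sigma> k = \<sigma> \<circ> sigma_pow \<sigma> (k-1)" using sp_succ[OF assms, of "k-1"] by simp
  then show ?thesis using is_ by (simp add: comp_assoc[symmetric])
qed

lemma sp_add:
  assumes "bij \<sigma>" shows "sigma_pow \<sigma> (a+b) = sigma_pow \<sigma> a \<circ> sigma_pow \<sigma> b"
proof (induction a rule: int_induct[where k=0])
  case base then show ?case by (simp add: sp0)
next
  case (step1 i)
  have "sigma_pow \<sigma> (i+1+b) = \<sigma> \<circ> sigma_pow \<sigma> (i+b)" using sp_succ[OF assms, of "i+b"] by (simp add: ac_simps)
  then show ?case using step1 sp_succ[OF assms, of i] by (simp add: comp_assoc)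
next
  case (step2 i)
  have "sigma_pow \<sigma> (i-1+b) = inv \<sigma> \<circ> sigma_pow \<sigma> (i+b)" using sp_pred[OF assms, of "i+b"] by (simp add: algebra_simps)
  then show ?case using step2 sp_pred[OF assms, of i] by (simp add: comp_assoc)
qed

lemma Fix_add: "bij \<sigma> \<Longrightarrow> x \<in> Fix \<sigma> a \<Longrightarrow> x \<in> Fix \<sigma> b \<Longrightarrow> x \<in> Fix \<sigma> (a+b)"
  by (simp add: Fix_def sp_add)

lemma Fix_neg: "bij \<sigma> \<Longrightarrow> x \<in> Fix \<sigma> a \<Longrightarrow> x \<in> Fix \<sigma> (-a)"
  using sp_add[of \<sigma> "-a" a] by (simp add: Fix_def sp0) (metis comp_apply id_apply)

lemma Fix_neg_iff: "bij \<sigma> \<Longrightarrow> Fix \<sigma> (-a) = Fix \<sigma> a"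
  using Fix_neg[of \<sigma> _ a] Fix_neg[of \<sigma> _ "-a"] by auto

lemma Fix_mult: "bij \<sigma> \<Longrightarrow> x \<in> Fix \<sigma> a \<Longrightarrow> x \<in> Fix \<sigma> (j*a)"
proof (induction j rule: int_induct[where k=0])
  case base then show ?case by (simp add: Fix_def sp0)
next
  case (step1 i) then show ?case using Fix_add[of \<sigma> x "i*a" a] by (simp add: algebra_simps)
next
  case (step2 i) then show ?case using Fix_add[of \<sigma> x "i*a" "-a"] Fix_neg[of \<sigma> x a] by (simp add: algebra_simps)
qed

lemma Fix_mod: "bij \<sigma> \<Longrightarrow> x \<in> Fix \<sigma> k \<Longrightarrow> x \<in> Fix \<sigma> n \<Longrightarrow> x \<in> Fix \<sigma> (k mod n)"
proof -
  assume b: "bij \<sigma>" and k: "x \<in> Fix \<sigma> k" and n: "x \<in> Fix \<sigma> n"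
  have "x \<in> Fix \<sigma> (k + (-(k div n))*n)" by (rule Fix_add[OF b k Fix_mult[OF b n]])
  moreover have "k + (-(k div n))*n = k mod n" by (simp add: minus_div_mult_eq_mod[symmetric])
  ultimately show ?thesis by simp
qed


lemma sup_norm_ge:
  fixes f :: "'a::topological_space \<Rightarrow> complex"
  assumes "compact (UNIV::'a::topological_space set)" "continuous_on UNIV f"
  shows "cmod (f y) \<le> sup_norm f"
proof -
  have "compact ((\<lambda>y. cmod (f y)) ` UNIV)"
    by (rule compact_continuous_image) (use assms in \<open>auto intro!: continuous_intros\<close>)
  then have "bdd_above (range (\<lambda>y. cmod (f y)))"
    by (simp add: bounded_imp_bdd_above compact_imp_bounded)
  then show ?thesis unfolding sup_norm_def by (rule cSUP_upper[OF UNIV_I])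
qed

lemma sup_norm_nonneg:
  fixes f :: "'a::topological_space \<Rightarrow> complex"
  assumes "compact (UNIV::'a::topological_space set)" "continuous_on UNIV f"
  shows "0 \<le> sup_norm f"
  using sup_norm_ge[OF assms, of undefined] norm_ge_zero order_trans by blast

lemma sup_norm_le: "(\<And>y. cmod (f y) \<le> M) \<Longrightarrow> sup_norm f \<le> M"
  unfolding sup_norm_def by (rule cSUP_least) auto

lemma not_in_cs: "k \<notin> coeff_support l \<Longrightarrow> l k y = 0"
  by (simp add: coeff_support_def)

lemma l1_norm_nonneg:
  assumes "compact (UNIV::'a::topological_space set)" "l \<in> c00"
  shows "0 \<le> l1_norm (l :: 'a l1elem)"
  unfolding l1_norm_def using assms by (auto intro!: sum_nonneg sup_norm_nonneg simp: c00_def)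

lemma l1_norm_ge:
  assumes "compact (UNIV::'a::topological_space set)" "l \<in> c00"
  shows "cmod ((l :: 'a l1elem) k y) \<le> l1_norm l"
proof (cases "k \<in> coeff_support l")
  case True
  have "cmod (l k y) \<le> sup_norm (l k)" using assms by (intro sup_norm_ge) (auto simp: c00_def)
  also have "\<dots> \<le> l1_norm l" unfolding l1_norm_def
    using assms True by (intro member_le_sum sup_norm_nonneg) (auto simp: c00_def)
  finally show ?thesis .
next
  case False then show ?thesis using l1_norm_nonneg[OF assms] by (simp add: not_in_cs)
qed

lemma c00_diff: "a \<in> c00 \<Longrightarrow> b \<in> c00 \<Longrightarrow> l1_diff b a \<in> c00"
proof -
  assume a: "a \<in> c00" and b: "b \<in> c00"
  have "coeff_support (l1_diff b a) \<subseteq> coeff_support a \<union> coeff_support b"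
    by (auto simp: coeff_support_def l1_diff_def fun_eq_iff)
  then have "finite (coeff_support (l1_diff b a))"
    using a b by (auto simp: c00_def intro: finite_subset)
  moreover have "continuous_on UNIV (l1_diff b a k)" for k
    using a b unfolding l1_diff_def c00_def by (auto intro!: continuous_intros)
  ultimately show ?thesis by (simp add: c00_def)
qed

definition single :: "int \<Rightarrow> ('a \<Rightarrow> complex) \<Rightarrow> 'a l1elem" where
  "single k f = (\<lambda>m y. if m = k then f y else 0)"

lemma cs_single: "coeff_support (single k f) \<subseteq> {k}"
  by (auto simp: coeff_support_def single_def)

lemma single_C00':
  assumes "continuous_on UNIV f" "supp f \<subseteq> Fix \<sigma> k"
  shows "single k f \<in> C00' \<sigma>"
proof -
  have "finite (coeff_support (single k f))" using cs_single finite_subset by fastforce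
  moreover have "continuous_on UNIV (single k f m)" for m
    using assms(1) by (cases "m = k") (auto simp: single_def)
  moreover have "supp (single k f m) \<subseteq> Fix \<sigma> m" for m
    using assms(2) by (cases "m = k") (auto simp: single_def supp_def)
  ultimately show ?thesis by (simp add: C00'_def c00_def)
qed

lemma zero_C00': "(\<lambda>k y. 0) \<in> C00' \<sigma>"
  by (auto simp: C00'_def c00_def coeff_support_def supp_def)

lemma zero_C00'_dummy: True by simp

lemma nz_interior:
  assumes "l \<in> C00' \<sigma>" "l k y \<noteq> 0"
  shows "y \<in> interior (Fix \<sigma> k)"
proof -
  have c: "continuous_on UNIV (l k)" and s: "supp (l k) \<subseteq> Fix \<sigma> k"
    using assms(1) by (auto simp: C00'_def c00_def)
  have o: "open (l k -` (- {0}))" using c by (simp add: continuous_on_open_vimage open_Compl)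
  have "l k -` (- {0}) \<subseteq> supp (l k)"
    unfolding supp_def using closure_subset[of "{y. l k y \<noteq> 0}"] by (simp add: vimage_def)
  then have sub: "l k -` (- {0}) \<subseteq> Fix \<sigma> k" using s by (rule order.trans)
  have "y \<in> l k -` (- {0})" using assms(2) by simp
  then show ?thesis using interior_maximal[OF sub o] by blast
qed


lemma mp:
  assumes "x \<in> FixInt \<sigma>"
  shows "min_period \<sigma> x \<ge> 1" "x \<in> interior (Fix \<sigma> (min_period \<sigma> x))"
    "\<And>m. m \<ge> 1 \<Longrightarrow> x \<in> interior (Fix \<sigma> m) \<Longrightarrow> min_period \<sigma> x \<le> m"
proof -
  define P where "P m \<longleftrightarrow> m \<ge> 1 \<and> x \<in> interior (Fix \<sigma> m)" for m :: int
  obtain q where q: "P q" using assms by (auto simp: FixInt_def P_def)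
  then have ex: "\<exists>k::nat. P (int k)" by (metis P_def int_nat_eq order.trans zero_le_one)
  define n0 where "n0 = (LEAST k::nat. P (int k))"
  have Pn0: "P (int n0)" unfolding n0_def using ex by (rule LeastI_ex)
  have min: "int n0 \<le> y" if "P y" for y
  proof -
    have "y \<ge> 1" using that by (simp add: P_def)
    then have "P (int (nat y))" using that by simp
    then have "n0 \<le> nat y" unfolding n0_def by (rule Least_le)
    then show ?thesis using \<open>y \<ge> 1\<close> by linarith
  qed
  have eq: "min_period \<sigma> x = int n0"
    unfolding min_period_def using Pn0 min by (intro Least_equality) (auto simp: P_def)
  show "min_period \<sigma> x \<ge> 1" "x \<in> interior (Fix \<sigma> (min_period \<sigma> x))"
    using Pn0 eq by (auto simp: P_def)
  show "\<And>m. m \<ge> 1 \<Longrightarrow> x \<in> interior (Fix \<sigma> m) \<Longrightarrow> min_period \<sigma> x \<le> m"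
    using min eq by (auto simp: P_def)
qed

lemma mp_dvd:
  assumes "bij \<sigma>" "x \<in> FixInt \<sigma>" "x \<in> interior (Fix \<sigma> k)"
  shows "min_period \<sigma> x dvd k"
proof (rule ccontr)
  define n where "n = min_period \<sigma> x"
  assume nd: "\<not> n dvd k"
  have n1: "n \<ge> 1" using mp(1)[OF assms(2)] by (simp add: n_def)
  have "x \<in> interior (Fix \<sigma> k) \<inter> interior (Fix \<sigma> n)" using assms(3) mp(2)[OF assms(2)] by (simp add: n_def)
  also have "\<dots> = interior (Fix \<sigma> k \<inter> Fix \<sigma> n)" by simp
  also have "\<dots> \<subseteq> interior (Fix \<sigma> (k mod n))"
    by (rule interior_mono) (use Fix_mod[OF assms(1)] in blast)
  finally have xi: "x \<in> interior (Fix \<sigma> (k mod n))" .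
  have "k mod n \<noteq> 0" using nd by (simp add: dvd_eq_mod_eq_0)
  moreover have "k mod n \<ge> 0" "k mod n < n" using n1 by auto
  ultimately have "k mod n \<ge> 1" by linarith
  then have "n \<le> k mod n" using mp(3)[OF assms(2) _ xi] by (simp add: n_def)
  then show False using \<open>k mod n < n\<close> by simp
qed

lemma finite_J: "finite (coeff_support a) \<Longrightarrow> n \<noteq> (0::int) \<Longrightarrow> finite {j. j*n \<in> coeff_support a}"
proof -
  assume f: "finite (coeff_support a)" and n: "n \<noteq> 0"
  have "inj (\<lambda>j. j*n)" using n by (auto simp: inj_def)
  then have "finite ((\<lambda>j. j*n) -` coeff_support a)" using f by (rule finite_vimageI[rotated])
  then show ?thesis by (simp add: vimage_def)
qed

lemma omega_J:
  assumes "n = min_period \<sigma> x" "finite J" "{j. j*n \<in> coeff_support a} \<subseteq> J"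
  shows "omega_xc \<sigma> x c a = (\<Sum>j\<in>J. a (j*n) x * c powi j)"
  unfolding omega_xc_def assms(1)[symmetric]
  by (rule sum.mono_neutral_left[OF assms(2,3)]) (auto simp: not_in_cs)




lemma Fix_n:
  assumes "bij \<sigma>" "x \<in> FixInt \<sigma>" "n = min_period \<sigma> x"
  shows "x \<in> Fix \<sigma> (j*n)"
  using Fix_mult[OF assms(1) interior_subset[THEN subsetD, OF mp(2)[OF assms(2)]]] assms(3) by simp

lemma sp_fix: "x \<in> Fix \<sigma> k \<Longrightarrow> sigma_pow \<sigma> k x = x" by (simp add: Fix_def)

lemma mult_coeff:
  assumes b: "bij \<sigma>" and x: "x \<in> FixInt \<sigma>" and n: "n = min_period \<sigma> x"
    and a: "a \<in> C00' \<sigma>"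
  shows "l1_mult \<sigma> a bb (j*n) x = (\<Sum>i\<in>{i. i*n \<in> coeff_support a}. a (i*n) x * bb ((j-i)*n) x)"
proof -
  define Ja where "Ja = {i. i*n \<in> coeff_support a}"
  have n1: "n \<ge> 1" using mp(1)[OF x] n by simp
  have fa: "finite (coeff_support a)" using a by (simp add: C00'_def c00_def)
  have "l1_mult \<sigma> a bb (j*n) x = (\<Sum>k\<in>coeff_support a. a k x * alpha_pow \<sigma> k (bb (j*n - k)) x)"
    by (simp add: l1_mult_def)
  also have "\<dots> = (\<Sum>k\<in>(\<lambda>i. i*n) ` Ja. a k x * alpha_pow \<sigma> k (bb (j*n - k)) x)"
  proof (rule sum.mono_neutral_right[OF fa])
    show "(\<lambda>i. i*n) ` Ja \<subseteq> coeff_support a" by (auto simp: Ja_def)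
    show "\<forall>k\<in>coeff_support a - (\<lambda>i. i*n) ` Ja. a k x * alpha_pow \<sigma> k (bb (j*n - k)) x = 0"
    proof
      fix k assume k: "k \<in> coeff_support a - (\<lambda>i. i*n) ` Ja"
      show "a k x * alpha_pow \<sigma> k (bb (j*n - k)) x = 0"
      proof (rule ccontr)
        assume "a k x * alpha_pow \<sigma> k (bb (j*n - k)) x \<noteq> 0"
        then have "a k x \<noteq> 0" by auto
        then have "x \<in> interior (Fix \<sigma> k)" by (rule nz_interior[OF a])
        then have "n dvd k" using mp_dvd[OF b x] n by simp
        then obtain i where "k = i*n" by (auto simp: dvd_def mult.commute)
        then show False using k by (auto simp: Ja_def)
      qed
    qed
  qed
  also have "\<dots> = (\<Sum>i\<in>Ja. a (i*n) x * alpha_pow \<sigma> (i*n) (bb (j*n - i*n)) x)"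
    using n1 by (subst sum.reindex) (auto simp: inj_on_def)
  also have "\<dots> = (\<Sum>i\<in>Ja. a (i*n) x * bb ((j-i)*n) x)"
  proof (rule sum.cong[OF refl])
    fix i
    have "x \<in> Fix \<sigma> ((-i)*n)" by (rule Fix_n[OF b x n])
    then have "sigma_pow \<sigma> (-(i*n)) x = x" by (simp add: Fix_def)
    then show "a (i*n) x * alpha_pow \<sigma> (i*n) (bb (j*n - i*n)) x = a (i*n) x * bb ((j-i)*n) x"
      by (simp add: alpha_pow_def algebra_simps)
  qed
  finally show ?thesis by (simp add: Ja_def)
qed

lemma supp_mult:
  assumes "finite (coeff_support a)"
  shows "coeff_support (l1_mult \<sigma> a bb) \<subseteq> (\<lambda>(p,q). p+q) ` (coeff_support a \<times> coeff_support bb)"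
proof
  fix m assume m: "m \<in> coeff_support (l1_mult \<sigma> a bb)"
  show "m \<in> (\<lambda>(p,q). p+q) ` (coeff_support a \<times> coeff_support bb)"
  proof (rule ccontr)
    assume nm: "m \<notin> (\<lambda>(p,q). p+q) ` (coeff_support a \<times> coeff_support bb)"
    have "bb (m - k) = (\<lambda>_. 0)" if "k \<in> coeff_support a" for k
    proof -
      have "m - k \<notin> coeff_support bb"
      proof
        assume "m - k \<in> coeff_support bb"
        then have "(k, m-k) \<in> coeff_support a \<times> coeff_support bb" using that by simp
        then have "(\<lambda>(p,q). p+q) (k, m-k) \<in> (\<lambda>(p,q). p+q) ` (coeff_support a \<times> coeff_support bb)"
          by (rule imageI)
        then show False using nm by simp
      qed
      then show ?thesis by (simp add: coeff_support_def)
    qed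
    then have "l1_mult \<sigma> a bb m = (\<lambda>_. 0)"
      by (auto simp: l1_mult_def alpha_pow_def fun_eq_iff intro!: sum.neutral)
    then show False using m by (simp add: coeff_support_def)
  qed
qed

lemma omega_mult:
  assumes b: "bij \<sigma>" and x: "x \<in> FixInt \<sigma>" and c: "c \<noteq> 0"
    and a: "a \<in> C00' \<sigma>" and bb: "bb \<in> C00' \<sigma>"
  shows "omega_xc \<sigma> x c (l1_mult \<sigma> a bb) = omega_xc \<sigma> x c a * omega_xc \<sigma> x c bb"
proof -
  define n where "n = min_period \<sigma> x"
  have n1: "n \<ge> 1" using mp(1)[OF x] n_def by simp
  have fa: "finite (coeff_support a)" and fb: "finite (coeff_support bb)"
    using a bb by (auto simp: C00'_def c00_def)
  define Ja where "Ja = {i. i*n \<in> coeff_support a}"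
  define Jb where "Jb = {i. i*n \<in> coeff_support bb}"
  define Jab where "Jab = {i. i*n \<in> coeff_support (l1_mult \<sigma> a bb)}"
  have fJa: "finite Ja" using finite_J[OF fa] n1 by (simp add: Ja_def)
  have fJb: "finite Jb" using finite_J[OF fb] n1 by (simp add: Jb_def)
  have "finite (coeff_support (l1_mult \<sigma> a bb))"
    by (rule finite_subset[OF supp_mult[OF fa]]) (use fa fb in auto)
  then have fJab: "finite Jab" using finite_J[of "l1_mult \<sigma> a bb" n] n1 by (simp add: Jab_def)
  define J where "J = Jab \<union> (\<lambda>(i,l). i+l) ` (Ja \<times> Jb)"
  have fJ: "finite J" using fJab fJa fJb by (simp add: J_def)
  have "omega_xc \<sigma> x c (l1_mult \<sigma> a bb) = (\<Sum>j\<in>J. l1_mult \<sigma> a bb (j*n) x * c powi j)"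
    by (rule omega_J[OF n_def fJ]) (auto simp: J_def Jab_def)
  also have "\<dots> = (\<Sum>j\<in>J. (\<Sum>i\<in>Ja. a (i*n) x * bb ((j-i)*n) x) * c powi j)"
    using mult_coeff[OF b x n_def a] by (simp add: Ja_def)
  also have "\<dots> = (\<Sum>i\<in>Ja. a (i*n) x * c powi i * (\<Sum>j\<in>J. bb ((j-i)*n) x * c powi (j-i)))"
  proof -
    have "(\<Sum>j\<in>J. (\<Sum>i\<in>Ja. a (i*n) x * bb ((j-i)*n) x) * c powi j)
        = (\<Sum>j\<in>J. \<Sum>i\<in>Ja. a (i*n) x * c powi i * (bb ((j-i)*n) x * c powi (j-i)))"
    proof (rule sum.cong[OF refl])
      fix j
      have pw: "c powi j = c powi i * c powi (j-i)" for i
        using power_int_add[of c i "j-i"] c by simp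
      show "(\<Sum>i\<in>Ja. a (i*n) x * bb ((j-i)*n) x) * c powi j
          = (\<Sum>i\<in>Ja. a (i*n) x * c powi i * (bb ((j-i)*n) x * c powi (j-i)))"
        unfolding sum_distrib_right
      proof (rule sum.cong[OF refl])
        fix i show "a (i*n) x * bb ((j-i)*n) x * c powi j = a (i*n) x * c powi i * (bb ((j-i)*n) x * c powi (j-i))"
          by (subst pw[of i]) (simp only: mult_ac)
      qed
    qed
    also have "\<dots> = (\<Sum>i\<in>Ja. \<Sum>j\<in>J. a (i*n) x * c powi i * (bb ((j-i)*n) x * c powi (j-i)))"
      by (rule sum.swap)
    finally show ?thesis by (simp add: sum_distrib_left)
  qed
  also have "\<dots> = (\<Sum>i\<in>Ja. a (i*n) x * c powi i * omega_xc \<sigma> x c bb)"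
  proof (rule sum.cong[OF refl])
    fix i assume i: "i \<in> Ja"
    have "omega_xc \<sigma> x c bb = (\<Sum>l\<in>(\<lambda>j. j - i) ` J. bb (l*n) x * c powi l)"
    proof (rule omega_J[OF n_def])
      show "finite ((\<lambda>j. j - i) ` J)" using fJ by simp
      show "{j. j * n \<in> coeff_support bb} \<subseteq> (\<lambda>j. j - i) ` J"
      proof
        fix l assume "l \<in> {j. j * n \<in> coeff_support bb}"
        then have "l \<in> Jb" by (simp add: Jb_def)
        then have "i + l \<in> J" using i by (force simp: J_def)
        then show "l \<in> (\<lambda>j. j - i) ` J" by (rule rev_image_eqI) simp
      qed
    qed
    also have "\<dots> = (\<Sum>j\<in>J. bb ((j-i)*n) x * c powi (j-i))"
      by (subst sum.reindex) (auto simp: inj_on_def)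
    finally show "a (i*n) x * c powi i * (\<Sum>j\<in>J. bb ((j-i)*n) x * c powi (j-i))
        = a (i*n) x * c powi i * omega_xc \<sigma> x c bb" by simp
  qed
  also have "\<dots> = omega_xc \<sigma> x c a * omega_xc \<sigma> x c bb"
    unfolding omega_xc_def n_def[symmetric] Ja_def by (simp add: sum_distrib_right)
  finally show ?thesis .
qed



lemma omega_add:
  assumes x: "x \<in> FixInt \<sigma>" and fa: "finite (coeff_support a)" and fb: "finite (coeff_support bb)"
  shows "omega_xc \<sigma> x c (l1_add a bb) = omega_xc \<sigma> x c a + omega_xc \<sigma> x c bb"
proof -
  define n where "n = min_period \<sigma> x"
  have n1: "n \<ge> 1" using mp(1)[OF x] n_def by simp
  define J where "J = {i. i*n \<in> coeff_support a} \<union> {i. i*n \<in> coeff_support bb}"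
  have fJ: "finite J" using finite_J[OF fa, of n] finite_J[OF fb, of n] n1 by (simp add: J_def)
  have s: "{j. j*n \<in> coeff_support (l1_add a bb)} \<subseteq> J"
    by (auto simp: J_def coeff_support_def l1_add_def fun_eq_iff)
  show ?thesis
    using omega_J[OF n_def fJ s] omega_J[OF n_def fJ, of a] omega_J[OF n_def fJ, of bb]
    by (auto simp: J_def l1_add_def sum.distrib distrib_right)
qed

lemma omega_diff:
  assumes x: "x \<in> FixInt \<sigma>" and fa: "finite (coeff_support a)" and fb: "finite (coeff_support bb)"
  shows "omega_xc \<sigma> x c (l1_diff bb a) = omega_xc \<sigma> x c bb - omega_xc \<sigma> x c a"
proof -
  define n where "n = min_period \<sigma> x"
  have n1: "n \<ge> 1" using mp(1)[OF x] n_def by simp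
  define J where "J = {i. i*n \<in> coeff_support a} \<union> {i. i*n \<in> coeff_support bb}"
  have fJ: "finite J" using finite_J[OF fa, of n] finite_J[OF fb, of n] n1 by (simp add: J_def)
  have s: "{j. j*n \<in> coeff_support (l1_diff bb a)} \<subseteq> J"
    by (auto simp: J_def coeff_support_def l1_diff_def fun_eq_iff)
  show ?thesis
    using omega_J[OF n_def fJ s] omega_J[OF n_def fJ, of a] omega_J[OF n_def fJ, of bb]
    by (auto simp: J_def l1_diff_def sum_subtractf left_diff_distrib)
qed

lemma omega_scale:
  assumes x: "x \<in> FixInt \<sigma>" and fa: "finite (coeff_support a)"
  shows "omega_xc \<sigma> x c (l1_scale d a) = d * omega_xc \<sigma> x c a"
proof -
  define n where "n = min_period \<sigma> x"
  have n1: "n \<ge> 1" using mp(1)[OF x] n_def by simp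
  define J where "J = {i. i*n \<in> coeff_support a}"
  have fJ: "finite J" using finite_J[OF fa, of n] n1 by (simp add: J_def)
  have s: "{j. j*n \<in> coeff_support (l1_scale d a)} \<subseteq> J"
    by (auto simp: J_def coeff_support_def l1_scale_def fun_eq_iff)
  show ?thesis
    using omega_J[OF n_def fJ s] omega_J[OF n_def fJ, of a]
    by (auto simp: J_def l1_scale_def sum_distrib_left mult_ac)
qed

lemma omega_star:
  assumes b: "bij \<sigma>" and x: "x \<in> FixInt \<sigma>" and n: "n = min_period \<sigma> x"
    and fJ: "finite J" and s: "{i. i*n \<in> coeff_support a} \<subseteq> J"
  shows "omega_xc \<sigma> x c (l1_star \<sigma> a) = (\<Sum>i\<in>J. cnj (a (i*n) x) * c powi (-i))"
proof -
  have s2: "{j. j*n \<in> coeff_support (l1_star \<sigma> a)} \<subseteq> uminus ` J"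
  proof
    fix j assume j: "j \<in> {j. j*n \<in> coeff_support (l1_star \<sigma> a)}"
    have "(-j)*n \<in> coeff_support a"
    proof (rule ccontr)
      assume "(-j)*n \<notin> coeff_support a"
      then have "a (-(j*n)) = (\<lambda>_. 0)" by (simp add: coeff_support_def)
      then have "l1_star \<sigma> a (j*n) = (\<lambda>_. 0)" by (simp add: l1_star_def alpha_pow_def fun_eq_iff)
      then show False using j by (simp add: coeff_support_def)
    qed
    then have "-j \<in> J" using s by auto
    then show "j \<in> uminus ` J" by (rule rev_image_eqI) simp
  qed
  have "omega_xc \<sigma> x c (l1_star \<sigma> a) = (\<Sum>j\<in>uminus ` J. l1_star \<sigma> a (j*n) x * c powi j)"
    by (rule omega_J[OF n _ s2]) (use fJ in simp)
  also have "\<dots> = (\<Sum>i\<in>J. l1_star \<sigma> a ((-i)*n) x * c powi (-i))"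
    by (subst sum.reindex) (auto simp: inj_on_def)
  also have "\<dots> = (\<Sum>i\<in>J. cnj (a (i*n) x) * c powi (-i))"
  proof (rule sum.cong[OF refl])
    fix i
    have "x \<in> Fix \<sigma> (i*n)" by (rule Fix_n[OF b x n])
    then show "l1_star \<sigma> a ((-i)*n) x * c powi (-i) = cnj (a (i*n) x) * c powi (-i)"
      by (simp add: l1_star_def alpha_pow_def Fix_def)
  qed
  finally show ?thesis .
qed

lemma omega_single:
  assumes x: "x \<in> FixInt \<sigma>" and n: "n = min_period \<sigma> x"
  shows "omega_xc \<sigma> x c (single (j*n) f) = f x * c powi j"
proof -
  have n1: "n \<ge> 1" using mp(1)[OF x] n by simp
  have "{i. i*n \<in> coeff_support (single (j*n) f)} \<subseteq> {j}"
    using cs_single[of "j*n" f] n1 by auto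
  then show ?thesis using omega_J[OF n, of "{j}"] by (simp add: single_def)
qed

lemma omega_bound:
  assumes K: "compact (UNIV::'a::topological_space set)" and x: "x \<in> FixInt \<sigma>" and c: "cmod c = 1"
    and l: "(l :: 'a l1elem) \<in> c00"
  shows "cmod (omega_xc \<sigma> x c l) \<le> l1_norm l"
proof -
  define n where "n = min_period \<sigma> x"
  have n1: "n \<ge> 1" using mp(1)[OF x] n_def by simp
  have fl: "finite (coeff_support l)" and cl: "\<And>k. continuous_on UNIV (l k)" using l by (auto simp: c00_def)
  define Jl where "Jl = {i. i*n \<in> coeff_support l}"
  have fJ: "finite Jl" using finite_J[OF fl, of n] n1 by (simp add: Jl_def)
  have "cmod (omega_xc \<sigma> x c l) = cmod (\<Sum>j\<in>Jl. l (j*n) x * c powi j)"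
    by (simp add: omega_xc_def n_def Jl_def)
  also have "\<dots> \<le> (\<Sum>j\<in>Jl. cmod (l (j*n) x * c powi j))" by (rule norm_sum)
  also have "\<dots> = (\<Sum>j\<in>Jl. cmod (l (j*n) x))" using c by (simp add: norm_mult norm_power_int)
  also have "\<dots> \<le> (\<Sum>j\<in>Jl. sup_norm (l (j*n)))" by (intro sum_mono sup_norm_ge[OF K cl])
  also have "\<dots> = (\<Sum>k\<in>(\<lambda>j. j*n) ` Jl. sup_norm (l k))"
    using n1 by (subst sum.reindex) (auto simp: inj_on_def)
  also have "\<dots> \<le> (\<Sum>k\<in>coeff_support l. sup_norm (l k))"
    by (rule sum_mono2[OF fl]) (auto simp: Jl_def intro: sup_norm_nonneg[OF K cl])
  finally show ?thesis by (simp add: l1_norm_def)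
qed



lemma Fix0: "Fix \<sigma> 0 = UNIV" by (simp add: Fix_def sp0)

lemma zero_off:
  assumes b: "bij \<sigma>" and x: "x \<notin> FixInt \<sigma>" and l: "l \<in> C00' \<sigma>" and k: "k \<noteq> 0"
  shows "l k x = 0"
proof (rule ccontr)
  assume "l k x \<noteq> 0"
  then have xi: "x \<in> interior (Fix \<sigma> k)" by (rule nz_interior[OF l])
  show False
  proof (cases "k \<ge> 1")
    case True then show False using x xi by (auto simp: FixInt_def)
  next
    case False
    then have "-k \<ge> 1" using k by linarith
    moreover have "x \<in> interior (Fix \<sigma> (-k))" using xi Fix_neg_iff[OF b, of k] by simp
    ultimately show False using x by (auto simp: FixInt_def)
  qed
qed

lemma part1:
  fixes \<sigma> :: "'a::t2_space \<Rightarrow> 'a"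
  assumes K: "compact (UNIV :: 'a set)" and b: "bij \<sigma>" and x: "x \<notin> FixInt \<sigma>"
  shows "is_hermitian_character \<sigma> (C00' \<sigma>) (omega_x x) \<and> l1_continuous_on (C00' \<sigma>) (omega_x x)"
proof -
  have mult: "omega_x x (l1_mult \<sigma> a bb) = omega_x x a * omega_x x bb"
    if a: "a \<in> C00' \<sigma>" for a bb
  proof -
    have "omega_x x (l1_mult \<sigma> a bb) = (\<Sum>k\<in>coeff_support a. a k x * alpha_pow \<sigma> k (bb (0 - k)) x)"
      by (simp add: omega_x_def l1_mult_def)
    also have "\<dots> = (\<Sum>k\<in>coeff_support a. if k = 0 then a 0 x * bb 0 x else 0)"
      by (rule sum.cong[OF refl]) (auto simp: zero_off[OF b x a] alpha_pow_def sp0)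
    also have "\<dots> = a 0 x * bb 0 x"
      using a by (cases "0 \<in> coeff_support a") (simp_all add: sum.delta not_in_cs C00'_def c00_def)
    finally show ?thesis by (simp add: omega_x_def)
  qed
  have one: "single 0 (\<lambda>_. 1) \<in> C00' \<sigma>" by (rule single_C00') (auto simp: Fix0)
  have chr: "is_character \<sigma> (C00' \<sigma>) (omega_x x)"
    unfolding is_character_def
    using mult one by (auto simp: omega_x_def l1_add_def l1_scale_def single_def intro!: bexI[of _ "single 0 (\<lambda>_. 1)"])
  have herm: "\<forall>a\<in>C00' \<sigma>. omega_x x (l1_star \<sigma> a) = cnj (omega_x x a)"
    by (simp add: omega_x_def l1_star_def alpha_pow_def sp0)
  have cont: "l1_continuous_on (C00' \<sigma>) (omega_x x)"
    unfolding l1_continuous_on_def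
  proof (intro ballI allI impI)
    fix a e assume a: "a \<in> C00' \<sigma>" and e: "(e::real) > 0"
    show "\<exists>d>0. \<forall>bb\<in>C00' \<sigma>. l1_norm (l1_diff bb a) < d \<longrightarrow> cmod (omega_x x bb - omega_x x a) < e"
    proof (intro exI[of _ e] conjI ballI impI e)
      fix bb assume bb: "bb \<in> C00' \<sigma>" and lt: "l1_norm (l1_diff bb a) < e"
      have "l1_diff bb a \<in> c00" using a bb by (intro c00_diff) (auto simp: C00'_def)
      then have "cmod (l1_diff bb a 0 x) \<le> l1_norm (l1_diff bb a)" by (rule l1_norm_ge[OF K])
      then show "cmod (omega_x x bb - omega_x x a) < e" using lt by (simp add: omega_x_def l1_diff_def)
    qed
  qed
  show ?thesis using chr herm cont by (simp add: is_hermitian_character_def)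
qed



lemma bump:
  fixes x :: "'a::t2_space"
  assumes "compact (UNIV :: 'a set)" "open U" "x \<in> U"
  obtains f :: "'a \<Rightarrow> real" where "continuous_on UNIV f" "f x = 1"
    "\<And>y. 0 \<le> f y" "\<And>y. f y \<le> 1" "closure {y. f y \<noteq> 0} \<subseteq> U"
proof -
  have N: "normal_space (euclidean :: 'a topology)"
  proof (rule compact_Hausdorff_or_regular_imp_normal_space)
    show "compact_space (euclidean :: 'a topology)" using assms(1) by (simp add: compact_space_def)
    show "Hausdorff_space (euclidean :: 'a topology) \<or> regular_space (euclidean :: 'a topology)"
      by (simp add: Hausdorff_space_def separation_t2 disjnt_def)
  qed
  have c1: "closedin euclidean (- U)" using assms(2) by (simp add: closed_Compl)
  have c2: "closedin euclidean {x}" by simp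
  have d: "disjnt (- U) {x}" using assms(3) by (simp add: disjnt_def)
  obtain g where g: "continuous_map euclidean (top_of_set {0..1}) g" "g ` (- U) \<subseteq> {0}" "g ` {x} \<subseteq> {1::real}"
    using N c1 c2 d unfolding normal_space_iff_Urysohn by blast
  have gc: "continuous_on UNIV g" and gr: "\<And>y. g y \<in> {0..1}"
    using g(1) by (auto simp: continuous_map_in_subtopology)
  define f where "f y = max 0 (2 * g y - 1)" for y
  have fc: "continuous_on UNIV f" unfolding f_def
    by (intro continuous_intros gc)
  have "closure {y. f y \<noteq> 0} \<subseteq> {y. g y \<ge> 1/2}"
  proof (rule closure_minimal)
    show "{y. f y \<noteq> 0} \<subseteq> {y. g y \<ge> 1/2}" by (auto simp: f_def)
    show "closed {y. g y \<ge> 1/2}" using closed_Collect_le[OF continuous_on_const gc, of "1/2"]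
      by simp
  qed
  also have "\<dots> \<subseteq> U" using g(2) by force
  finally show ?thesis
    using that[OF fc] g(3) gr by (force simp: f_def)
qed

lemma char2:
  assumes b: "bij \<sigma>" and x: "x \<in> FixInt \<sigma>" and c: "c \<noteq> 0"
  shows "is_character \<sigma> (C00' \<sigma>) (omega_xc \<sigma> x c)"
proof -
  define n where "n = min_period \<sigma> x"
  have one: "single (0*n) (\<lambda>_. 1) \<in> C00' \<sigma>" by (rule single_C00') (auto simp: Fix0)
  have "omega_xc \<sigma> x c (single (0*n) (\<lambda>_. 1)) = 1" using omega_single[OF x n_def, of c 0 "\<lambda>_. 1"] by simp
  moreover have fin: "\<And>a. a \<in> C00' \<sigma> \<Longrightarrow> finite (coeff_support a)" by (simp add: C00'_def c00_def)
  ultimately show ?thesis unfolding is_character_def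
  proof (intro conjI ballI allI)
    fix a bb assume "a \<in> C00' \<sigma>" "bb \<in> C00' \<sigma>"
    then show "omega_xc \<sigma> x c (l1_add a bb) = omega_xc \<sigma> x c a + omega_xc \<sigma> x c bb"
      "omega_xc \<sigma> x c (l1_mult \<sigma> a bb) = omega_xc \<sigma> x c a * omega_xc \<sigma> x c bb"
      using omega_add[OF x] omega_mult[OF b x c] fin by auto
  next
    fix d a assume "a \<in> C00' \<sigma>"
    then show "omega_xc \<sigma> x c (l1_scale d a) = d * omega_xc \<sigma> x c a"
      using omega_scale[OF x] fin by auto
  next
    assume "omega_xc \<sigma> x c (single (0*n) (\<lambda>_. 1)) = 1"
    then show "\<exists>a\<in>C00' \<sigma>. omega_xc \<sigma> x c a \<noteq> 0" using one by force
  qed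
qed

lemma herm_iff:
  fixes \<sigma> :: "'a::t2_space \<Rightarrow> 'a"
  assumes K: "compact (UNIV :: 'a set)" and b: "bij \<sigma>" and x: "x \<in> FixInt \<sigma>" and c: "c \<noteq> 0"
  shows "is_hermitian_character \<sigma> (C00' \<sigma>) (omega_xc \<sigma> x c) \<longleftrightarrow> cmod c = 1"
proof
  define n where "n = min_period \<sigma> x"
  have n1: "n \<ge> 1" using mp(1)[OF x] n_def by simp
  assume h: "is_hermitian_character \<sigma> (C00' \<sigma>) (omega_xc \<sigma> x c)"
  have U: "open (interior (Fix \<sigma> n))" "x \<in> interior (Fix \<sigma> n)" using mp(2)[OF x] n_def by auto
  obtain f :: "'a \<Rightarrow> real" where f: "continuous_on UNIV f" "f x = 1" "closure {y. f y \<noteq> 0} \<subseteq> interior (Fix \<sigma> n)"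
  proof (rule bump[OF K U])
    fix f :: "'a \<Rightarrow> real"
    assume "continuous_on UNIV f" "f x = 1" "\<And>y. 0 \<le> f y" "\<And>y. f y \<le> 1"
      "closure {y. f y \<noteq> 0} \<subseteq> interior (Fix \<sigma> n)"
    then show thesis using that[of f] by simp
  qed
  define g where "g y = complex_of_real (f y)" for y
  have gc: "continuous_on UNIV g" unfolding g_def by (intro continuous_intros f(1))
  have "supp g \<subseteq> Fix \<sigma> (1*n)" using f(3) interior_subset by (force simp: supp_def g_def)
  then have a: "single (1*n) g \<in> C00' \<sigma>" by (rule single_C00'[OF gc])
  have wa: "omega_xc \<sigma> x c (single (1*n) g) = c" using omega_single[OF x n_def, of c 1 g] f(2) by (simp add: g_def)
  have "{i. i*n \<in> coeff_support (single (1*n) g)} \<subseteq> {1}" using cs_single[of "1*n" g] n1 by auto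
  then have "omega_xc \<sigma> x c (l1_star \<sigma> (single (1*n) g)) = cnj (g x) * c powi (-1)"
    using omega_star[OF b x n_def, of "{1}"] by (simp add: single_def)
  also have "\<dots> = inverse c" using f(2) by (simp add: g_def power_int_minus)
  finally have "inverse c = cnj c" using h a wa by (auto simp: is_hermitian_character_def)
  then have "c * cnj c = 1" using c by (metis right_inverse)
  then have "complex_of_real ((cmod c)^2) = 1" by (simp only: complex_norm_square)
  then have "(cmod c)^2 = 1" by (metis of_real_eq_1_iff)
  then show "cmod c = 1" using norm_ge_zero[of c] by (auto simp: power2_eq_1_iff)
next
  define n where "n = min_period \<sigma> x"
  have n1: "n \<ge> 1" using mp(1)[OF x] n_def by simp
  assume c1: "cmod c = 1"
  have "c * cnj c = of_real ((cmod c)^2)" by (rule complex_norm_square[symmetric])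
  also have "\<dots> = 1" using c1 by simp
  finally have "c * cnj c = 1" .
  then have ic: "inverse c = cnj c" by (rule Fields.inverse_unique)
  have pw: "c powi (-i) = cnj c powi i" for i
    by (simp only: power_int_minus power_int_inverse[symmetric] ic)
  have "omega_xc \<sigma> x c (l1_star \<sigma> a) = cnj (omega_xc \<sigma> x c a)" if a: "a \<in> C00' \<sigma>" for a
  proof -
    have fa: "finite (coeff_support a)" using a by (simp add: C00'_def c00_def)
    have fJ: "finite {i. i*n \<in> coeff_support a}" using finite_J[OF fa, of n] n1 by simp
    have "omega_xc \<sigma> x c (l1_star \<sigma> a) = (\<Sum>i\<in>{i. i*n \<in> coeff_support a}. cnj (a (i*n) x) * c powi (-i))"
      by (rule omega_star[OF b x n_def fJ subset_refl])
    also have "\<dots> = (\<Sum>i\<in>{i. i*n \<in> coeff_support a}. cnj (a (i*n) x * c powi i))"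
      by (rule sum.cong[OF refl]) (simp add: pw)
    also have "\<dots> = cnj (omega_xc \<sigma> x c a)" by (simp add: omega_xc_def n_def)
    finally show ?thesis .
  qed
  then show "is_hermitian_character \<sigma> (C00' \<sigma>) (omega_xc \<sigma> x c)"
    using char2[OF b x c] by (simp add: is_hermitian_character_def)
qed



lemma exists_big_pow:
  assumes "c \<noteq> 0" "cmod c \<noteq> 1" "(d::real) > 0"
  obtains j where "1 < d/2 * cmod c powi j"
proof (cases "cmod c > 1")
  case True
  obtain N where N: "2/d < cmod c ^ N" using real_arch_pow[OF True] by blast
  have "1 < d/2 * cmod c ^ N" using N assms(3) by (simp add: field_simps)
  then show ?thesis using that[of "int N"] by (simp add: power_int_of_nat)
next
  case False
  then have lt: "cmod c < 1" using assms(2) by simp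
  have pos: "cmod c > 0" using assms(1) by simp
  have r: "1 < inverse (cmod c)" using lt pos by (simp add: one_less_inverse)
  obtain N where N: "2/d < inverse (cmod c) ^ N" using real_arch_pow[OF r] by blast
  have "1 < d/2 * inverse (cmod c) ^ N" using N assms(3) by (simp add: field_simps)
  moreover have "cmod c powi (- int N) = inverse (cmod c) ^ N"
    by (simp add: power_int_minus power_int_of_nat power_inverse)
  ultimately show ?thesis using that[of "- int N"] by simp
qed

lemma cont_iff:
  fixes \<sigma> :: "'a::t2_space \<Rightarrow> 'a"
  assumes K: "compact (UNIV :: 'a set)" and b: "bij \<sigma>" and x: "x \<in> FixInt \<sigma>" and c: "c \<noteq> 0"
  shows "l1_continuous_on (C00' \<sigma>) (omega_xc \<sigma> x c) \<longleftrightarrow> cmod c = 1"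
proof
  assume cont: "l1_continuous_on (C00' \<sigma>) (omega_xc \<sigma> x c)"
  show "cmod c = 1"
  proof (rule ccontr)
    assume c1: "cmod c \<noteq> 1"
    define n where "n = min_period \<sigma> x"
    have n1: "n \<ge> 1" using mp(1)[OF x] n_def by simp
    define z where "z = (\<lambda>(k::int) (y::'a). (0::complex))"
    have z: "z \<in> C00' \<sigma>" unfolding z_def by (rule zero_C00')
    obtain d where d: "d > 0" and dd: "\<And>bb. bb \<in> C00' \<sigma> \<Longrightarrow> l1_norm (l1_diff bb z) < d \<Longrightarrow>
        cmod (omega_xc \<sigma> x c bb - omega_xc \<sigma> x c z) < 1"
      using cont z unfolding l1_continuous_on_def by (meson zero_less_one)
    have wz: "omega_xc \<sigma> x c z = 0" by (simp add: omega_xc_def z_def coeff_support_def)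
    obtain j where j: "1 < d/2 * cmod c powi j" using exists_big_pow[OF c c1 d] by blast
    have U: "open (interior (Fix \<sigma> n))" "x \<in> interior (Fix \<sigma> n)" using mp(2)[OF x] n_def by auto
    obtain f :: "'a \<Rightarrow> real" where f: "continuous_on UNIV f" "f x = 1" "\<And>y. 0 \<le> f y" "\<And>y. f y \<le> 1"
      "closure {y. f y \<noteq> 0} \<subseteq> interior (Fix \<sigma> n)"
    proof (rule bump[OF K U])
      fix f :: "'a \<Rightarrow> real"
      assume "continuous_on UNIV f" "f x = 1" "\<And>y. 0 \<le> f y" "\<And>y. f y \<le> 1"
        "closure {y. f y \<noteq> 0} \<subseteq> interior (Fix \<sigma> n)"
      then show thesis using that[of f] by simp
    qed
    define g where "g y = complex_of_real (d/2 * f y)" for y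
    have gc: "continuous_on UNIV g" unfolding g_def by (intro continuous_intros f(1))
    have "supp g \<subseteq> closure {y. f y \<noteq> 0}" using d unfolding supp_def g_def
      by (intro closure_mono) auto
    also have "\<dots> \<subseteq> Fix \<sigma> n" using f(5) interior_subset by blast
    also have "\<dots> \<subseteq> Fix \<sigma> (j*n)" using Fix_mult[OF b] by blast
    finally have bC: "single (j*n) g \<in> C00' \<sigma>" by (rule single_C00'[OF gc])
    have diff: "l1_diff (single (j*n) g) z = single (j*n) g" by (simp add: l1_diff_def z_def)
    have sg: "sup_norm g \<le> d/2"
    proof (rule sup_norm_le)
      fix y
      have "cmod (g y) = d/2 * f y" using f(3)[of y] d unfolding g_def norm_of_real by simp
      also have "\<dots> \<le> d/2 * 1" using f(4)[of y] d by (intro mult_left_mono) auto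
      finally show "cmod (g y) \<le> d/2" by simp
    qed
    have "l1_norm (single (j*n) g) = (\<Sum>k\<in>coeff_support (single (j*n) g). sup_norm (single (j*n) g k))"
      by (simp add: l1_norm_def)
    also have "\<dots> \<le> (\<Sum>k\<in>{j*n}. sup_norm (single (j*n) g k))"
      using bC cs_single[of "j*n" g]
      by (intro sum_mono2) (auto intro!: sup_norm_nonneg[OF K] simp: C00'_def c00_def)
    also have "\<dots> = sup_norm g" by (simp add: single_def)
    also have "\<dots> < d" using sg d by simp
    finally have "cmod (omega_xc \<sigma> x c (single (j*n) g)) < 1"
      using dd[OF bC] diff wz by simp
    moreover have "omega_xc \<sigma> x c (single (j*n) g) = complex_of_real (d/2) * c powi j"
      using omega_single[OF x n_def, of c j g] f(2) by (simp add: g_def)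
    ultimately have "d/2 * cmod c powi j < 1" using d by (simp add: norm_mult norm_power_int)
    then show False using j by simp
  qed
next
  assume c1: "cmod c = 1"
  show "l1_continuous_on (C00' \<sigma>) (omega_xc \<sigma> x c)"
    unfolding l1_continuous_on_def
  proof (intro ballI allI impI)
    fix a e assume a: "a \<in> C00' \<sigma>" and e: "(e::real) > 0"
    show "\<exists>d>0. \<forall>bb\<in>C00' \<sigma>. l1_norm (l1_diff bb a) < d \<longrightarrow> cmod (omega_xc \<sigma> x c bb - omega_xc \<sigma> x c a) < e"
    proof (intro exI[of _ e] conjI ballI impI e)
      fix bb assume bb: "bb \<in> C00' \<sigma>" and lt: "l1_norm (l1_diff bb a) < e"
      have a0: "a \<in> c00" and b0: "bb \<in> c00" using a bb by (auto simp: C00'_def)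
      have "omega_xc \<sigma> x c bb - omega_xc \<sigma> x c a = omega_xc \<sigma> x c (l1_diff bb a)"
        using omega_diff[OF x] a0 b0 by (simp add: c00_def)
      also have "cmod \<dots> \<le> l1_norm (l1_diff bb a)"
        by (rule omega_bound[OF K x c1 c00_diff[OF a0 b0]])
      finally show "cmod (omega_xc \<sigma> x c bb - omega_xc \<sigma> x c a) < e" using lt by simp
    qed
  qed
qed

theorem lemma3p7:
  fixes \<sigma> :: "'a::t2_space \<Rightarrow> 'a"
  assumes "compact (UNIV :: 'a set)"
    and "\<exists>g. homeomorphism UNIV UNIV \<sigma> g"
  shows "(\<forall>x. x \<notin> FixInt \<sigma> \<longrightarrow>
            is_hermitian_character \<sigma> (C00' \<sigma>) (omega_x x) \<and>
            l1_continuous_on (C00' \<sigma>) (omega_x x))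
       \<and> (\<forall>x c. x \<in> FixInt \<sigma> \<and> c \<noteq> 0 \<longrightarrow>
            (l1_continuous_on (C00' \<sigma>) (omega_xc \<sigma> x c)
               \<longleftrightarrow> is_hermitian_character \<sigma> (C00' \<sigma>) (omega_xc \<sigma> x c)) \<and>
            (is_hermitian_character \<sigma> (C00' \<sigma>) (omega_xc \<sigma> x c) \<longleftrightarrow> cmod c = 1))"
proof -
  obtain g where h: "homeomorphism UNIV UNIV \<sigma> g" using assms(2) by blast
  have "\<And>y. g (\<sigma> y) = y" "\<And>y. \<sigma> (g y) = y" using h by (auto simp: homeomorphism_def)
  then have b: "bij \<sigma>" by (metis bijI injI surjI)
  show ?thesis
    using part1[OF assms(1) b] herm_iff[OF assms(1) b] cont_iff[OF assms(1) b] by blast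
qed


end
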